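(* Let $\Gamma$ be a $\Bbbk$-algebra and $\sim$ an equivalence relation on $\mathrm{cfs}(\Gamma)$. If $0\to U\to V\to W\to0$ is a short exact sequence of $\Gamma$-modules and $V$ is a block module, then $U$ and $W$ are block modules and $\mathrm{Supp}(V)=\mathrm{Supp}(U)\cup\mathrm{Supp}(W)$.
   Context: $\mathrm{cfs}(\Gamma)$: maximal two-sided ideals $\mathfrak m$ of $\Gamma$ with $\dim\Gamma/\mathfrak m<\infty$. For a class $B$, $\mathcal W(B)=\{\mathfrak m_1\cdots\mathfrak m_k:k\ge0,\mathfrak m_i\in B\}$; for a $\Gamma$-module $V$, $V(B)=\{v:\mathfrak m v=0$ for some $\mathfrak m\in\mathcal W(B)\}$. $V$ is a block module if $V=\bigoplus_BV(B)$; $\mathrm{Supp}(V)=\{B:V(B)\neq0\}$. *)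

theory Defs
  imports Complex_Main
begin

text \<open>A (unital, associative) algebra over a field: the ring structure comes from the
  type class ring_1 of the carrier type, and the scalar multiplication sc makes it a
  vector space over the field, compatibly with multiplication.\<close>
definition is_algebra :: "('k::field \<Rightarrow> 'a::ring_1 \<Rightarrow> 'a) \<Rightarrow> bool" where
  "is_algebra sc \<longleftrightarrow> vector_space sc \<and>
     (\<forall>c x y. sc c (x * y) = sc c x * y \<and> sc c (x * y) = x * sc c y)"

definition two_sided_ideal :: "'a::ring_1 set \<Rightarrow> bool" where
  "two_sided_ideal I \<longleftrightarrow> 0 \<in> I \<and> (\<forall>x\<in>I. \<forall>y\<in>I. x + y \<in> I) \<and> (\<forall>x\<in>I. - x \<in> I) \<and>
     (\<forall>x\<in>I. \<forall>r. r * x \<in> I \<and> x * r \<in> I)"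

definition maximal_ideal :: "'a::ring_1 set \<Rightarrow> bool" where
  "maximal_ideal I \<longleftrightarrow> two_sided_ideal I \<and> I \<noteq> UNIV \<and>
     (\<forall>J. two_sided_ideal J \<and> I \<subseteq> J \<longrightarrow> J = I \<or> J = UNIV)"

text \<open>dim_k (Gamma / m) is finite: finitely many elements span Gamma modulo m.\<close>
definition fin_codim :: "('k::field \<Rightarrow> 'a::ring_1 \<Rightarrow> 'a) \<Rightarrow> 'a set \<Rightarrow> bool" where
  "fin_codim sc I \<longleftrightarrow> (\<exists>S. finite S \<and> (\<forall>x. \<exists>s\<in>module.span sc S. x - s \<in> I))"

definition cfs :: "('k::field \<Rightarrow> 'a::ring_1 \<Rightarrow> 'a) \<Rightarrow> 'a set set" where
  "cfs sc = {m. maximal_ideal m \<and> fin_codim sc m}"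

definition ideal_prod :: "'a::ring_1 set \<Rightarrow> 'a set \<Rightarrow> 'a set" where
  "ideal_prod I J = {\<Sum>i<n. f i * g i | (n::nat) f g. \<forall>i<n. f i \<in> I \<and> g i \<in> J}"

fun ideal_prod_list :: "'a::ring_1 set list \<Rightarrow> 'a set" where
  "ideal_prod_list [] = UNIV"
| "ideal_prod_list (m # ms) = ideal_prod m (ideal_prod_list ms)"

definition Wd :: "'a::ring_1 set set \<Rightarrow> 'a set set" where
  "Wd B = {ideal_prod_list ms | ms. set ms \<subseteq> B}"

definition is_module :: "('a::ring_1 \<Rightarrow> 'v::ab_group_add \<Rightarrow> 'v) \<Rightarrow> bool" where
  "is_module act \<longleftrightarrow> (\<forall>a b v. act (a + b) v = act a v + act b v) \<and>
     (\<forall>a v w. act a (v + w) = act a v + act a w) \<and>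
     (\<forall>a b v. act (a * b) v = act a (act b v)) \<and> (\<forall>v. act 1 v = v)"

definition is_module_hom :: "('a::ring_1 \<Rightarrow> 'v::ab_group_add \<Rightarrow> 'v) \<Rightarrow>
    ('a \<Rightarrow> 'w::ab_group_add \<Rightarrow> 'w) \<Rightarrow> ('v \<Rightarrow> 'w) \<Rightarrow> bool" where
  "is_module_hom actV actW f \<longleftrightarrow> (\<forall>v w. f (v + w) = f v + f w) \<and> (\<forall>a v. f (actV a v) = actW a (f v))"

definition block_part :: "('a::ring_1 \<Rightarrow> 'v::ab_group_add \<Rightarrow> 'v) \<Rightarrow> 'a set set \<Rightarrow> 'v set" where
  "block_part act B = {v. \<exists>m\<in>Wd B. \<forall>x\<in>m. act x v = 0}"

definition blocks :: "('k::field \<Rightarrow> 'a::ring_1 \<Rightarrow> 'a) \<Rightarrow> ('a set \<times> 'a set) set \<Rightarrow> 'a set set set" where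
  "blocks sc R = cfs sc // R"

text \<open>V is the (internal) direct sum of the V(B), B ranging over the blocks.\<close>
definition block_module :: "('k::field \<Rightarrow> 'a::ring_1 \<Rightarrow> 'a) \<Rightarrow> ('a set \<times> 'a set) set \<Rightarrow>
    ('a \<Rightarrow> 'v::ab_group_add \<Rightarrow> 'v) \<Rightarrow> bool" where
  "block_module sc R act \<longleftrightarrow>
     (\<forall>v. \<exists>f. finite {B\<in>blocks sc R. f B \<noteq> 0} \<and> (\<forall>B\<in>blocks sc R. f B \<in> block_part act B) \<and>
              v = (\<Sum>B\<in>{B\<in>blocks sc R. f B \<noteq> 0}. f B)) \<and>
     (\<forall>f. finite {B\<in>blocks sc R. f B \<noteq> 0} \<and> (\<forall>B\<in>blocks sc R. f B \<in> block_part act B) \<and>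
              (\<Sum>B\<in>{B\<in>blocks sc R. f B \<noteq> 0}. f B) = 0 \<longrightarrow> (\<forall>B\<in>blocks sc R. f B = 0))"

definition Supp :: "('k::field \<Rightarrow> 'a::ring_1 \<Rightarrow> 'a) \<Rightarrow> ('a set \<times> 'a set) set \<Rightarrow>
    ('a \<Rightarrow> 'v::ab_group_add \<Rightarrow> 'v) \<Rightarrow> 'a set set set" where
  "Supp sc R act = {B\<in>blocks sc R. block_part act B \<noteq> {0}}"

end

theory Submission
  imports Defs
begin


lemma ideal_UNIV: "two_sided_ideal (UNIV::'a::ring_1 set)"
  by (simp add: two_sided_ideal_def)

lemma ideal_sum:
  fixes n :: nat
  assumes "two_sided_ideal I" "\<forall>i<n. h i \<in> I"
  shows "(\<Sum>i<n. h i) \<in> I"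
  using assms(2)
proof (induction n)
  case 0 then show ?case using assms(1) by (simp add: two_sided_ideal_def)
next
  case (Suc n) then show ?case using assms(1) by (simp add: two_sided_ideal_def)
qed

lemma my_concat_sum:
  fixes h1 h2 :: "nat \<Rightarrow> 'b::comm_monoid_add"
  shows "(\<Sum>i<n1+n2. (if i < n1 then h1 i else h2 (i - n1))) = (\<Sum>i<n1. h1 i) + (\<Sum>i<n2. h2 i)"
proof (induction n2)
  case 0 then show ?case by simp
next
  case (Suc n2) then show ?case by (simp add: add.assoc)
qed

lemma ideal_prod_iff:
  "x \<in> ideal_prod I J \<longleftrightarrow> (\<exists>n f g. x = (\<Sum>i<(n::nat). f i * g i) \<and> (\<forall>i<n. f i \<in> I \<and> g i \<in> J))"
  unfolding ideal_prod_def by auto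

lemma ideal_prodI:
  "\<forall>i<(n::nat). f i \<in> I \<and> g i \<in> J \<Longrightarrow> (\<Sum>i<n. f i * g i) \<in> ideal_prod I J"
  unfolding ideal_prod_def by blast

lemma ideal_prod_ideal:
  assumes I: "two_sided_ideal I" and J: "two_sided_ideal J"
  shows "two_sided_ideal (ideal_prod I J)"
  unfolding two_sided_ideal_def
proof (intro conjI ballI allI)
  show "0 \<in> ideal_prod I J" unfolding ideal_prod_def by (rule CollectI, rule exI[of _ 0]) simp
next
  fix x y assume "x \<in> ideal_prod I J" "y \<in> ideal_prod I J"
  then obtain n1 f1 g1 n2 f2 g2 where x: "x = (\<Sum>i<(n1::nat). f1 i * g1 i)" "\<forall>i<n1. f1 i \<in> I \<and> g1 i \<in> J"
    and y: "y = (\<Sum>i<(n2::nat). f2 i * g2 i)" "\<forall>i<n2. f2 i \<in> I \<and> g2 i \<in> J"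
    unfolding ideal_prod_iff by blast
  define f where "f i = (if i < n1 then f1 i else f2 (i - n1))" for i
  define g where "g i = (if i < n1 then g1 i else g2 (i - n1))" for i
  have "(\<Sum>i<n1+n2. f i * g i) = (\<Sum>i<n1+n2. (if i < n1 then f1 i * g1 i else f2 (i - n1) * g2 (i - n1)))"
    by (rule sum.cong) (auto simp: f_def g_def)
  also have "\<dots> = x + y" unfolding x(1) y(1) by (rule my_concat_sum)
  finally have "x + y = (\<Sum>i<n1+n2. f i * g i)" by simp
  moreover have "\<forall>i<n1+n2. f i \<in> I \<and> g i \<in> J" using x y by (auto simp: f_def g_def)
  ultimately show "x + y \<in> ideal_prod I J" unfolding ideal_prod_def by blast
next
  fix x assume "x \<in> ideal_prod I J"
  then obtain n f g where x: "x = (\<Sum>i<(n::nat). f i * g i)" "\<forall>i<n. f i \<in> I \<and> g i \<in> J"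
    unfolding ideal_prod_iff by blast
  have "- x = (\<Sum>i<n. (- f i) * g i)" using x by (simp add: sum_negf)
  moreover have "\<forall>i<n. - f i \<in> I \<and> g i \<in> J" using x I by (auto simp: two_sided_ideal_def)
  ultimately show "- x \<in> ideal_prod I J" using ideal_prodI[where n=n and f="\<lambda>i. - f i" and g=g and I=I and J=J] by simp
next
  fix x r assume "x \<in> ideal_prod I J"
  then obtain n f g where x: "x = (\<Sum>i<(n::nat). f i * g i)" "\<forall>i<n. f i \<in> I \<and> g i \<in> J"
    unfolding ideal_prod_iff by blast
  have "r * x = (\<Sum>i<n. (r * f i) * g i)" using x by (simp add: sum_distrib_left mult.assoc)
  moreover have "\<forall>i<n. r * f i \<in> I \<and> g i \<in> J" using x I by (auto simp: two_sided_ideal_def)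
  ultimately have 1: "r * x \<in> ideal_prod I J" using ideal_prodI[where n=n and f="\<lambda>i. r * f i" and g=g and I=I and J=J] by simp
  have "x * r = (\<Sum>i<n. f i * (g i * r))" using x by (simp add: sum_distrib_right mult.assoc)
  moreover have "\<forall>i<n. f i \<in> I \<and> g i * r \<in> J" using x J by (auto simp: two_sided_ideal_def)
  ultimately have 2: "x * r \<in> ideal_prod I J" using ideal_prodI[where n=n and f=f and g="\<lambda>i. g i * r" and I=I and J=J] by simp
  show "r * x \<in> ideal_prod I J" using 1 by blast
next
  fix x r assume "x \<in> ideal_prod I J"
  then obtain n f g where x: "x = (\<Sum>i<(n::nat). f i * g i)" "\<forall>i<n. f i \<in> I \<and> g i \<in> J"
    unfolding ideal_prod_iff by blast
  have "x * r = (\<Sum>i<n. f i * (g i * r))" using x by (simp add: sum_distrib_right mult.assoc)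
  moreover have "\<forall>i<n. f i \<in> I \<and> g i * r \<in> J" using x J by (auto simp: two_sided_ideal_def)
  ultimately show "x * r \<in> ideal_prod I J" using ideal_prodI[where n=n and f=f and g="\<lambda>i. g i * r" and I=I and J=J] by simp
qed

lemma ideal_prod_sub:
  assumes I: "two_sided_ideal I" and J: "two_sided_ideal J"
  shows "ideal_prod I J \<subseteq> I \<inter> J"
proof
  fix x assume "x \<in> ideal_prod I J"
  then obtain n f g where x: "x = (\<Sum>i<(n::nat). f i * g i)" "\<forall>i<n. f i \<in> I \<and> g i \<in> J"
    unfolding ideal_prod_iff by blast
  have "x \<in> I" unfolding x(1) by (rule ideal_sum[OF I]) (use x(2) I in \<open>auto simp: two_sided_ideal_def\<close>)
  moreover have "x \<in> J" unfolding x(1) by (rule ideal_sum[OF J]) (use x(2) J in \<open>auto simp: two_sided_ideal_def\<close>)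
  ultimately show "x \<in> I \<inter> J" by blast
qed

lemma ideal_prod_mono: "J \<subseteq> J' \<Longrightarrow> ideal_prod I J \<subseteq> ideal_prod I J'"
  unfolding ideal_prod_def by blast

lemma ipl_ideal: "\<forall>m\<in>set ms. two_sided_ideal m \<Longrightarrow> two_sided_ideal (ideal_prod_list ms)"
  by (induction ms) (auto simp: ideal_UNIV ideal_prod_ideal)

lemma ipl_append:
  assumes "\<forall>m\<in>set (ms1 @ ms2). two_sided_ideal m"
  shows "ideal_prod_list (ms1 @ ms2) \<subseteq> ideal_prod_list ms1 \<inter> ideal_prod_list ms2"
  using assms
proof (induction ms1)
  case Nil then show ?case by simp
next
  case (Cons m ms1)
  have i1: "two_sided_ideal (ideal_prod_list (ms1 @ ms2))" using Cons.prems by (intro ipl_ideal) auto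
  have im: "two_sided_ideal m" using Cons.prems by auto
  have "ideal_prod m (ideal_prod_list (ms1 @ ms2)) \<subseteq> ideal_prod m (ideal_prod_list ms1)"
    using Cons by (intro ideal_prod_mono) auto
  moreover have "ideal_prod m (ideal_prod_list (ms1 @ ms2)) \<subseteq> ideal_prod_list ms2"
    using ideal_prod_sub[OF im i1] Cons by auto
  ultimately show ?case by auto
qed

definition comax :: "'a::ring_1 set \<Rightarrow> 'a set \<Rightarrow> bool" where
  "comax I J \<longleftrightarrow> (\<exists>a\<in>I. \<exists>b\<in>J. a + b = 1)"

lemma comax_sym: "comax I J \<Longrightarrow> comax J I"
  unfolding comax_def by (metis add.commute)

lemma comax_prod:
  assumes I: "two_sided_ideal I" and "comax I J" "comax I K"
  shows "comax I (ideal_prod J K)"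
proof -
  obtain a b where ab: "a \<in> I" "b \<in> J" "a + b = 1" using assms(2) unfolding comax_def by blast
  obtain a' c where ac: "a' \<in> I" "c \<in> K" "a' + c = 1" using assms(3) unfolding comax_def by blast
  have "1 = (a + b) * (a' + c)" using ab ac by simp
  also have "\<dots> = (a * a' + a * c + b * a') + b * c" by (simp add: algebra_simps)
  finally have eq: "(a * a' + a * c + b * a') + b * c = 1" by simp
  have "a * a' \<in> I" "a * c \<in> I" "b * a' \<in> I" using I ab ac unfolding two_sided_ideal_def by blast+
  then have "a * a' + a * c + b * a' \<in> I" using I unfolding two_sided_ideal_def by blast
  moreover have "b * c \<in> ideal_prod J K" unfolding ideal_prod_def
    by (rule CollectI, rule exI[of _ 1], rule exI[of _ "\<lambda>_. b"], rule exI[of _ "\<lambda>_. c"]) (use ab ac in auto)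
  ultimately show ?thesis using eq unfolding comax_def by blast
qed

lemma comax_list1:
  assumes "two_sided_ideal p" "\<forall>q\<in>set ms. comax p q"
  shows "comax p (ideal_prod_list ms)"
  using assms(2)
proof (induction ms)
  case Nil then show ?case unfolding comax_def using assms(1) by (auto simp: two_sided_ideal_def intro!: bexI[of _ 0])
next
  case (Cons q ms) then show ?case using comax_prod[OF assms(1)] by simp
qed

lemma comax_list2:
  assumes "\<forall>p\<in>set ms1. two_sided_ideal p" "two_sided_ideal X" "\<forall>p\<in>set ms1. comax p X"
  shows "comax (ideal_prod_list ms1) X"
  using assms(1,3)
proof (induction ms1)
  case Nil then show ?case unfolding comax_def using assms(2) by (auto simp: two_sided_ideal_def intro!: bexI[of _ 0])
next
  case (Cons p ms)
  have "comax X p" "comax X (ideal_prod_list ms)" using Cons comax_sym by auto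
  then have "comax X (ideal_prod p (ideal_prod_list ms))"
    using comax_prod[OF assms(2)] by blast
  then show ?case using comax_sym by simp
qed

lemma max_comax:
  assumes p: "maximal_ideal p" and q: "maximal_ideal q" and ne: "p \<noteq> q"
  shows "comax p q"
proof (rule ccontr)
  assume nc: "\<not> comax p q"
  let ?S = "{a + b | a b. a \<in> p \<and> b \<in> q}"
  have ip: "two_sided_ideal p" and iq: "two_sided_ideal q" using p q by (auto simp: maximal_ideal_def)
  have "two_sided_ideal ?S" unfolding two_sided_ideal_def
  proof (intro conjI ballI allI)
    show "0 \<in> ?S" using ip iq unfolding two_sided_ideal_def by force
  next
    fix x y assume "x \<in> ?S" "y \<in> ?S"
    then obtain a b c d where "x = a + b" "y = c + d" "a \<in> p" "b \<in> q" "c \<in> p" "d \<in> q" by blast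
    moreover have "x + y = (a + c) + (b + d)" using calculation by (simp add: algebra_simps)
    ultimately show "x + y \<in> ?S" using ip iq unfolding two_sided_ideal_def by blast
  next
    fix x assume "x \<in> ?S"
    then obtain a b where "x = a + b" "a \<in> p" "b \<in> q" by blast
    moreover have "- x = (- a) + (- b)" using calculation by simp
    ultimately show "- x \<in> ?S" using ip iq unfolding two_sided_ideal_def by blast
  next
    fix x r assume "x \<in> ?S"
    then obtain a b where ab: "x = a + b" "a \<in> p" "b \<in> q" by blast
    have "r * x = r * a + r * b" "x * r = a * r + b * r" using ab by (simp_all add: algebra_simps)
    then show "r * x \<in> ?S" using ab ip iq unfolding two_sided_ideal_def by blast
  next
    fix x r assume "x \<in> ?S"
    then obtain a b where ab: "x = a + b" "a \<in> p" "b \<in> q" by blast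
    have "x * r = a * r + b * r" using ab by (simp_all add: algebra_simps)
    then show "x * r \<in> ?S" using ab ip iq unfolding two_sided_ideal_def by blast
  qed
  moreover have "p \<subseteq> ?S" using iq unfolding two_sided_ideal_def by force
  moreover have "?S \<noteq> UNIV"
  proof
    assume "?S = UNIV" then have "1 \<in> ?S" by simp
    then obtain a b where "1 = a + b" "a \<in> p" "b \<in> q" by blast
    then show False using nc unfolding comax_def by force
  qed
  ultimately have "?S = p" using p unfolding maximal_ideal_def by blast
  then have "q \<subseteq> p" using ip unfolding two_sided_ideal_def by force
  then have "p = q \<or> p = UNIV" using q ip unfolding maximal_ideal_def by blast
  then show False using ne p unfolding maximal_ideal_def by blast
qed



lemma addh_zero:
  fixes h :: "'v::ab_group_add \<Rightarrow> 'w::ab_group_add"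
  assumes "\<forall>x y. h (x + y) = h x + h y" shows "h 0 = 0"
proof -
  have "h (0 + 0) = h 0 + h 0" using assms by blast
  then have "h 0 + h 0 = h 0 + 0" by simp
  then show ?thesis by (simp only: add_left_cancel)
qed

lemma addh_neg:
  fixes h :: "'v::ab_group_add \<Rightarrow> 'w::ab_group_add"
  assumes "\<forall>x y. h (x + y) = h x + h y" shows "h (- x) = - h x"
proof -
  have "h (x + - x) = h x + h (- x)" using assms by blast
  then have "h (- x) + h x = 0" using addh_zero[OF assms] by (simp add: add.commute)
  then show ?thesis by (simp add: add_eq_0_iff2)
qed

lemma addh_diff:
  fixes h :: "'v::ab_group_add \<Rightarrow> 'w::ab_group_add"
  assumes "\<forall>x y. h (x + y) = h x + h y" shows "h (x - y) = h x - h y"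
proof -
  have "h (x + - y) = h x + h (- y)" using assms by blast
  then show ?thesis using addh_neg[OF assms, of y] by simp
qed

lemma addh_sum:
  fixes h :: "'v::ab_group_add \<Rightarrow> 'w::ab_group_add"
  assumes "\<forall>x y. h (x + y) = h x + h y" shows "h (\<Sum>i\<in>S. F i) = (\<Sum>i\<in>S. h (F i))"
proof (cases "finite S")
  case True then show ?thesis
    by (induction S rule: finite_induct) (simp_all add: addh_zero[OF assms] assms)
next
  case False then show ?thesis by (simp add: addh_zero[OF assms])
qed

definition ann :: "('a::ring_1 \<Rightarrow> 'v::ab_group_add \<Rightarrow> 'v) \<Rightarrow> 'a set \<Rightarrow> 'v \<Rightarrow> bool" where
  "ann act m v \<longleftrightarrow> (\<forall>x\<in>m. act x v = 0)"

lemma mod_add2: "is_module act \<Longrightarrow> \<forall>v w. act x (v + w) = act x v + act x w"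
  unfolding is_module_def by blast

lemma mod_zero: "is_module act \<Longrightarrow> act x 0 = 0"
  using addh_zero[of "act x", OF mod_add2[of act x]] by blast

lemma mod_neg: "is_module act \<Longrightarrow> act x (- v) = - act x v"
  using addh_neg[of "act x", OF mod_add2[of act x]] by blast

lemma hom_add: "is_module_hom a1 a2 f \<Longrightarrow> \<forall>x y. f (x + y) = f x + f y"
  unfolding is_module_hom_def by blast

lemma blk_sub: "equiv (cfs sc) R \<Longrightarrow> B \<in> blocks sc R \<Longrightarrow> B \<subseteq> cfs sc"
  unfolding blocks_def by (meson in_quotient_imp_subset)

lemma blk_disj: "equiv (cfs sc) R \<Longrightarrow> B \<in> blocks sc R \<Longrightarrow> B' \<in> blocks sc R \<Longrightarrow> B \<noteq> B' \<Longrightarrow> B \<inter> B' = {}"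
  unfolding blocks_def by (meson quotient_disj)

lemma blk_max: "equiv (cfs sc) R \<Longrightarrow> B \<in> blocks sc R \<Longrightarrow> p \<in> B \<Longrightarrow> maximal_ideal p"
  using blk_sub unfolding cfs_def by blast

lemma blk_ideal: "equiv (cfs sc) R \<Longrightarrow> B \<in> blocks sc R \<Longrightarrow> p \<in> B \<Longrightarrow> two_sided_ideal p"
  using blk_max unfolding maximal_ideal_def by blast

lemma Wd_ideal:
  assumes "equiv (cfs sc) R" "B \<in> blocks sc R" "m \<in> Wd B"
  shows "two_sided_ideal m"
proof -
  obtain ms where "m = ideal_prod_list ms" "set ms \<subseteq> B" using assms(3) unfolding Wd_def by blast
  then show ?thesis using blk_ideal[OF assms(1,2)] ipl_ideal by blast
qed

lemma Wd_comax:
  assumes eq: "equiv (cfs sc) R" and B: "B \<in> blocks sc R" and B': "B' \<in> blocks sc R" and ne: "B \<noteq> B'"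
    and m: "m \<in> Wd B" and m': "m' \<in> Wd B'"
  shows "comax m m'"
proof -
  obtain ms where ms: "m = ideal_prod_list ms" "set ms \<subseteq> B" using m unfolding Wd_def by blast
  obtain ms' where ms': "m' = ideal_prod_list ms'" "set ms' \<subseteq> B'" using m' unfolding Wd_def by blast
  have d: "B \<inter> B' = {}" using blk_disj[OF eq B B' ne] .
  have "\<forall>p\<in>set ms. comax p m'"
  proof
    fix p assume p: "p \<in> set ms"
    have "\<forall>q\<in>set ms'. comax p q"
      using p ms ms' d blk_max[OF eq B] blk_max[OF eq B'] max_comax by blast
    then show "comax p m'" unfolding ms'(1) using comax_list1 blk_ideal[OF eq B] p ms(2) by blast
  qed
  moreover have "two_sided_ideal m'" using Wd_ideal[OF eq B' m'] .
  ultimately show ?thesis unfolding ms(1) using comax_list2 blk_ideal[OF eq B] ms(2) by blast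
qed

lemma Wd_UNIV: "UNIV \<in> Wd B"
  unfolding Wd_def by (rule CollectI, rule exI[of _ "[]"]) simp

lemma bp_zero: "is_module act \<Longrightarrow> 0 \<in> block_part act B"
  unfolding block_part_def using Wd_UNIV mod_zero by blast

lemma bp_add:
  assumes eq: "equiv (cfs sc) R" and B: "B \<in> blocks sc R" and M: "is_module act"
    and x: "x \<in> block_part act B" and y: "y \<in> block_part act B"
  shows "x + y \<in> block_part act B"
proof -
  obtain m1 where m1: "m1 \<in> Wd B" "\<forall>z\<in>m1. act z x = 0" using x unfolding block_part_def by blast
  obtain m2 where m2: "m2 \<in> Wd B" "\<forall>z\<in>m2. act z y = 0" using y unfolding block_part_def by blast
  obtain ms1 where ms1: "m1 = ideal_prod_list ms1" "set ms1 \<subseteq> B" using m1 unfolding Wd_def by blast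
  obtain ms2 where ms2: "m2 = ideal_prod_list ms2" "set ms2 \<subseteq> B" using m2 unfolding Wd_def by blast
  have "ideal_prod_list (ms1 @ ms2) \<in> Wd B" unfolding Wd_def
    by (rule CollectI, rule exI[of _ "ms1 @ ms2"]) (use ms1 ms2 in auto)
  moreover have "ideal_prod_list (ms1 @ ms2) \<subseteq> m1 \<inter> m2"
    unfolding ms1(1) ms2(1) by (rule ipl_append) (use ms1 ms2 blk_ideal[OF eq B] in auto)
  moreover have "\<forall>z\<in>m1 \<inter> m2. act z (x + y) = 0" using m1 m2 M unfolding is_module_def by simp
  ultimately show ?thesis unfolding block_part_def by blast
qed

lemma bp_neg:
  assumes M: "is_module act" and x: "x \<in> block_part act B"
  shows "- x \<in> block_part act B"
  using x mod_neg[OF M] unfolding block_part_def by fastforce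

lemma bp_diff:
  assumes eq: "equiv (cfs sc) R" and B: "B \<in> blocks sc R" and M: "is_module act"
    and x: "x \<in> block_part act B" and y: "y \<in> block_part act B"
  shows "x - y \<in> block_part act B"
  using bp_add[OF eq B M x bp_neg[OF M y]] by simp

lemma bp_hom:
  assumes h: "is_module_hom a1 a2 g" and x: "x \<in> block_part a1 B"
  shows "g x \<in> block_part a2 B"
proof -
  have g0: "g 0 = 0" using addh_zero[OF hom_add[OF h]] .
  obtain m where m: "m \<in> Wd B" "\<forall>z\<in>m. a1 z x = 0" using x unfolding block_part_def by blast
  have "\<forall>z\<in>m. a2 z (g x) = 0"
  proof
    fix z assume "z \<in> m"
    then have "g (a1 z x) = 0" using m g0 by simp
    then show "a2 z (g x) = 0" using h unfolding is_module_hom_def by simp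
  qed
  then show ?thesis using m unfolding block_part_def by blast
qed

lemma bp_refl:
  assumes h: "is_module_hom a1 a2 f" and i: "inj f" and x: "f x \<in> block_part a2 B"
  shows "x \<in> block_part a1 B"
proof -
  have f0: "f 0 = 0" using addh_zero[OF hom_add[OF h]] .
  obtain m where m: "m \<in> Wd B" "\<forall>z\<in>m. a2 z (f x) = 0" using x unfolding block_part_def by blast
  have "\<forall>z\<in>m. a1 z x = 0"
  proof
    fix z assume "z \<in> m"
    then have "f (a1 z x) = f 0" using m h f0 unfolding is_module_hom_def by simp
    then show "a1 z x = 0" using i by (simp add: inj_eq)
  qed
  then show ?thesis using m unfolding block_part_def by blast
qed

lemma sep:
  assumes eq: "equiv (cfs sc) R" and M: "is_module act" and B0: "B0 \<in> blocks sc R" and m: "m \<in> Wd B0"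
    and fin: "finite S"
  shows "S \<subseteq> blocks sc R \<Longrightarrow> B0 \<notin> S \<Longrightarrow> \<forall>B\<in>S. y B \<in> block_part act B \<Longrightarrow>
    \<exists>N. two_sided_ideal N \<and> comax m N \<and> ann act N (\<Sum>B\<in>S. y B)"
  using fin
proof (induction S rule: finite_induct)
  case empty
  have "comax m UNIV" using Wd_ideal[OF eq B0 m] unfolding comax_def two_sided_ideal_def
    by (auto intro!: bexI[of _ 0])
  then show ?case using ideal_UNIV mod_zero[OF M] unfolding ann_def by auto
next
  case (insert B S)
  obtain N where N: "two_sided_ideal N" "comax m N" "ann act N (\<Sum>B\<in>S. y B)" using insert by auto
  have Bb: "B \<in> blocks sc R" "B0 \<noteq> B" using insert by auto
  obtain mB where mB: "mB \<in> Wd B" "\<forall>z\<in>mB. act z (y B) = 0" using insert.prems(3) unfolding block_part_def by blast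
  have imB: "two_sided_ideal mB" using Wd_ideal[OF eq Bb(1) mB(1)] .
  have "comax m mB" using Wd_comax[OF eq B0 Bb(1) Bb(2) m mB(1)] .
  then have c: "comax m (ideal_prod mB N)" using comax_prod[OF Wd_ideal[OF eq B0 m]] N by blast
  have sub: "ideal_prod mB N \<subseteq> mB \<inter> N" using ideal_prod_sub[OF imB N(1)] .
  have "ann act (ideal_prod mB N) (\<Sum>B\<in>insert B S. y B)"
    unfolding ann_def
  proof
    fix z assume "z \<in> ideal_prod mB N"
    then have "z \<in> mB" "z \<in> N" using sub by auto
    then show "act z (\<Sum>B\<in>insert B S. y B) = 0"
      using insert.hyps mB(2) N(3) M unfolding ann_def is_module_def by simp
  qed
  then show ?case using c ideal_prod_ideal[OF imB N(1)] by blast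
qed

lemma indep:
  assumes eq: "equiv (cfs sc) R" and M: "is_module act" and fin: "finite S" and S: "S \<subseteq> blocks sc R"
    and h: "\<forall>B\<in>S. h B \<in> block_part act B" and s: "(\<Sum>B\<in>S. h B) = 0"
  shows "\<forall>B\<in>S. h B = 0"
proof
  fix B assume B: "B \<in> S"
  have "h B + (\<Sum>B\<in>S - {B}. h B) = 0" using s sum.remove[OF fin B, of h] by simp
  then have hB: "h B = (\<Sum>B\<in>S - {B}. - h B)" by (simp add: sum_negf eq_neg_iff_add_eq_0)
  obtain m where m: "m \<in> Wd B" "\<forall>z\<in>m. act z (h B) = 0" using h B unfolding block_part_def by blast
  obtain N where N: "two_sided_ideal N" "comax m N" "ann act N (\<Sum>B\<in>S - {B}. - h B)"
    using sep[OF eq M _ m(1), of "S - {B}" "\<lambda>B. - h B"] B S fin h bp_neg[OF M] by auto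
  obtain a n where an: "a \<in> m" "n \<in> N" "a + n = 1" using N(2) unfolding comax_def by blast
  have "h B = act (a + n) (h B)" using an M unfolding is_module_def by simp
  also have "\<dots> = act a (h B) + act n (h B)" using M unfolding is_module_def by simp
  also have "\<dots> = 0" using an m N(3) hB unfolding ann_def by simp
  finally show "h B = 0" .
qed



lemma bm_intro:
  assumes eq: "equiv (cfs sc) R" and M: "is_module act"
    and sp: "\<forall>v. \<exists>S h. finite S \<and> S \<subseteq> blocks sc R \<and> (\<forall>B\<in>S. h B \<in> block_part act B) \<and> v = (\<Sum>B\<in>S. h B)"
  shows "block_module sc R act"
proof -
  have P1: "\<exists>f. finite {B \<in> blocks sc R. f B \<noteq> 0} \<and> (\<forall>B\<in>blocks sc R. f B \<in> block_part act B) \<and>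
          v = (\<Sum>B\<in>{B \<in> blocks sc R. f B \<noteq> 0}. f B)" for v
  proof -
    obtain S h where Sh: "finite S" "S \<subseteq> blocks sc R" "\<forall>B\<in>S. h B \<in> block_part act B" "v = (\<Sum>B\<in>S. h B)"
      using spec[OF sp, of v] by (elim exE conjE) blast
    define F where "F B = (if B \<in> S then h B else 0)" for B
    have sub: "{B \<in> blocks sc R. F B \<noteq> 0} \<subseteq> S" unfolding F_def by auto
    have fin: "finite {B \<in> blocks sc R. F B \<noteq> 0}" using finite_subset[OF sub Sh(1)] .
    have mem: "\<forall>B\<in>blocks sc R. F B \<in> block_part act B" using Sh(3) bp_zero[OF M] unfolding F_def by simp
    have z: "\<forall>i\<in>S - {B \<in> blocks sc R. F B \<noteq> 0}. F i = 0" using Sh(2) by blast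
    have "(\<Sum>B\<in>{B \<in> blocks sc R. F B \<noteq> 0}. F B) = (\<Sum>B\<in>S. F B)"
      by (rule sum.mono_neutral_left[OF Sh(1) sub z])
    also have "\<dots> = v" unfolding Sh(4) F_def by simp
    finally have e: "v = (\<Sum>B\<in>{B \<in> blocks sc R. F B \<noteq> 0}. F B)" by simp
    show ?thesis using fin mem e by blast
  qed
  have P2: "\<forall>B\<in>blocks sc R. f B = 0" if a1: "finite {B \<in> blocks sc R. f B \<noteq> 0}"
     and a2: "\<forall>B\<in>blocks sc R. f B \<in> block_part act B"
     and a3: "(\<Sum>B\<in>{B \<in> blocks sc R. f B \<noteq> 0}. f B) = 0" for f
  proof -
    have s: "{B \<in> blocks sc R. f B \<noteq> 0} \<subseteq> blocks sc R" by blast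
    have h: "\<forall>B\<in>{B \<in> blocks sc R. f B \<noteq> 0}. f B \<in> block_part act B" using a2 by blast
    have "\<forall>B\<in>{B \<in> blocks sc R. f B \<noteq> 0}. f B = 0" using indep[OF eq M a1 s h a3] .
    then show ?thesis by blast
  qed
  show ?thesis unfolding block_module_def using P1 P2 by blast
qed


lemma bm_dest:
  assumes "block_module sc R act"
  shows "\<exists>S h. finite S \<and> S \<subseteq> blocks sc R \<and> (\<forall>B\<in>S. h B \<in> block_part act B) \<and> v = (\<Sum>B\<in>S. h B)"
proof -
  obtain F where F: "finite {B\<in>blocks sc R. F B \<noteq> 0}" "\<forall>B\<in>blocks sc R. F B \<in> block_part act B"
    "v = (\<Sum>B\<in>{B\<in>blocks sc R. F B \<noteq> 0}. F B)" using assms unfolding block_module_def by blast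
  show ?thesis
    by (rule exI[of _ "{B\<in>blocks sc R. F B \<noteq> 0}"], rule exI[of _ F]) (use F in blast)
qed


lemma Supp_iff: "is_module act \<Longrightarrow> B \<in> Supp sc R act \<longleftrightarrow> B \<in> blocks sc R \<and> (\<exists>x\<in>block_part act B. x \<noteq> 0)"
proof -
  assume M: "is_module act"
  have z: "0 \<in> block_part act B" using bp_zero[OF M] .
  have "block_part act B \<noteq> {0} \<longleftrightarrow> (\<exists>x\<in>block_part act B. x \<noteq> 0)"
  proof
    assume "block_part act B \<noteq> {0}" then show "\<exists>x\<in>block_part act B. x \<noteq> 0" using z by blast
  next
    assume "\<exists>x\<in>block_part act B. x \<noteq> 0" then show "block_part act B \<noteq> {0}" by blast
  qed
  then show ?thesis unfolding Supp_def by simp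
qed


theorem mainTheorem7:
  fixes sc :: "'k::field \<Rightarrow> 'a::ring_1 \<Rightarrow> 'a"
    and R :: "('a set \<times> 'a set) set"
    and actU :: "'a \<Rightarrow> 'u::ab_group_add \<Rightarrow> 'u"
    and actV :: "'a \<Rightarrow> 'v::ab_group_add \<Rightarrow> 'v"
    and actW :: "'a \<Rightarrow> 'w::ab_group_add \<Rightarrow> 'w"
    and f :: "'u \<Rightarrow> 'v" and g :: "'v \<Rightarrow> 'w"
  assumes "is_algebra sc"
    and "equiv (cfs sc) R"
    and "is_module actU" and "is_module actV" and "is_module actW"
    and "is_module_hom actU actV f" and "is_module_hom actV actW g"
    and "inj f" and "surj g" and "range f = {v. g v = 0}"
    and "block_module sc R actV"
  shows "block_module sc R actU \<and> block_module sc R actW \<and>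
         Supp sc R actV = Supp sc R actU \<union> Supp sc R actW"
proof -
  note eq = assms(2) and MU = assms(3) and MV = assms(4) and MW = assms(5)
  note hf = assms(6) and hg = assms(7) and inj = assms(8) and sur = assms(9) and ker = assms(10)
  note bV = assms(11)
  have fadd: "\<forall>x y. f (x + y) = f x + f y" using hom_add[OF hf] .
  have gadd: "\<forall>x y. g (x + y) = g x + g y" using hom_add[OF hg] .
  have f0: "f 0 = 0" using addh_zero[OF fadd] .
  have g0: "g 0 = 0" using addh_zero[OF gadd] .
  have gf: "g (f u) = 0" for u using ker by auto
  have bU: "block_module sc R actU"
  proof (rule bm_intro[OF eq MU], rule allI)
    fix u
    obtain S h where Sh: "finite S" "S \<subseteq> blocks sc R" "\<forall>B\<in>S. h B \<in> block_part actV B" "f u = (\<Sum>B\<in>S. h B)"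
      using bm_dest[OF bV, of "f u"] by (elim exE conjE) blast
    have "g (f u) = (\<Sum>B\<in>S. g (h B))" unfolding Sh(4) by (rule addh_sum[OF gadd])
    then have "(\<Sum>B\<in>S. g (h B)) = 0" using gf by simp
    then have z: "\<forall>B\<in>S. g (h B) = 0"
      by (intro indep[OF eq MW Sh(1) Sh(2)]) (use Sh(3) bp_hom[OF hg] in auto)
    define k where "k B = (SOME x. f x = h B)" for B
    have fk: "\<forall>B\<in>S. f (k B) = h B"
    proof
      fix B assume "B \<in> S"
      then have "h B \<in> range f" using z ker by auto
      then obtain x where x: "h B = f x" by blast
      show "f (k B) = h B" unfolding k_def by (rule someI[where x=x]) (use x in simp)
    qed
    have kb: "\<forall>B\<in>S. k B \<in> block_part actU B"
    proof
      fix B assume "B \<in> S"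
      then show "k B \<in> block_part actU B" by (intro bp_refl[OF hf inj]) (use fk Sh(3) in simp)
    qed
    have "f (\<Sum>B\<in>S. k B) = (\<Sum>B\<in>S. f (k B))" by (rule addh_sum[OF fadd])
    also have "\<dots> = (\<Sum>B\<in>S. h B)" using fk by simp
    finally have "f (\<Sum>B\<in>S. k B) = f u" using Sh(4) by simp
    then have "u = (\<Sum>B\<in>S. k B)" by (simp add: inj_eq[OF inj])
    then show "\<exists>S h. finite S \<and> S \<subseteq> blocks sc R \<and> (\<forall>B\<in>S. h B \<in> block_part actU B) \<and> u = (\<Sum>B\<in>S. h B)"
      using Sh(1,2) kb by blast
  qed
  have bW: "block_module sc R actW"
  proof (rule bm_intro[OF eq MW], rule allI)
    fix w
    obtain v where v: "w = g v" using surjD[OF sur, of w] by (elim exE) simp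
    obtain S h where Sh: "finite S" "S \<subseteq> blocks sc R" "\<forall>B\<in>S. h B \<in> block_part actV B" "v = (\<Sum>B\<in>S. h B)"
      using bm_dest[OF bV, of v] by (elim exE conjE) blast
    have "w = (\<Sum>B\<in>S. g (h B))" using addh_sum[OF gadd, of h S] Sh(4) v by simp
    moreover have "\<forall>B\<in>S. g (h B) \<in> block_part actW B" using Sh(3) bp_hom[OF hg] by blast
    ultimately show "\<exists>S h. finite S \<and> S \<subseteq> blocks sc R \<and> (\<forall>B\<in>S. h B \<in> block_part actW B) \<and> w = (\<Sum>B\<in>S. h B)"
      using Sh(1,2) by (intro exI[of _ S] exI[of _ "\<lambda>B. g (h B)"]) simp
  qed
  have s1: "Supp sc R actU \<subseteq> Supp sc R actV"
  proof
    fix B assume "B \<in> Supp sc R actU"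
    then have "B \<in> blocks sc R \<and> (\<exists>x\<in>block_part actU B. x \<noteq> 0)" by (simp only: Supp_iff[OF MU])
    then obtain x where x: "B \<in> blocks sc R" "x \<in> block_part actU B" "x \<noteq> 0" by blast
    have "f x \<noteq> 0" using x(3) f0 inj_eq[OF inj, of x 0] by simp
    then show "B \<in> Supp sc R actV" unfolding Supp_iff[OF MV] using x bp_hom[OF hf] by blast
  qed
  have s2: "Supp sc R actW \<subseteq> Supp sc R actV"
  proof
    fix B assume "B \<in> Supp sc R actW"
    then have "B \<in> blocks sc R \<and> (\<exists>x\<in>block_part actW B. x \<noteq> 0)" by (simp only: Supp_iff[OF MW])
    then obtain w where w: "B \<in> blocks sc R" "w \<in> block_part actW B" "w \<noteq> 0" by blast
    obtain v where v: "w = g v" using surjD[OF sur, of w] by (elim exE) simp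
    obtain S h where Sh: "finite S" "S \<subseteq> blocks sc R" "\<forall>B\<in>S. h B \<in> block_part actV B" "v = (\<Sum>B\<in>S. h B)"
      using bm_dest[OF bV, of v] by (elim exE conjE) blast
    define h' where "h' B' = (if B' \<in> S then h B' else 0)" for B'
    define S' where "S' = insert B S"
    have fS': "finite S'" "S' \<subseteq> blocks sc R" using Sh w unfolding S'_def by auto
    have h'b: "\<forall>B'\<in>S'. h' B' \<in> block_part actV B'" using Sh(3) bp_zero[OF MV] unfolding h'_def by auto
    have "v = (\<Sum>B'\<in>S. h' B')" unfolding Sh(4) h'_def by simp
    also have "\<dots> = (\<Sum>B'\<in>S'. h' B')"
      by (rule sum.mono_neutral_left[OF fS'(1)]) (auto simp: S'_def h'_def)
    finally have vS': "v = (\<Sum>B'\<in>S'. h' B')" .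
    define k where "k B' = (if B' = B then g (h' B) - w else g (h' B'))" for B'
    have BS': "B \<in> S'" unfolding S'_def by simp
    have "(\<Sum>B'\<in>S'. k B') = k B + (\<Sum>B'\<in>S' - {B}. k B')" using sum.remove[OF fS'(1) BS'] by simp
    also have "\<dots> = (g (h' B) - w) + (\<Sum>B'\<in>S' - {B}. g (h' B'))" unfolding k_def by simp
    also have "\<dots> = (\<Sum>B'\<in>S'. g (h' B')) - w" using sum.remove[OF fS'(1) BS', of "\<lambda>B'. g (h' B')"]
      by (simp add: algebra_simps)
    also have "\<dots> = 0" using addh_sum[OF gadd, of h' S'] vS' v by simp
    finally have ks: "(\<Sum>B'\<in>S'. k B') = 0" .
    have kb: "\<forall>B'\<in>S'. k B' \<in> block_part actW B'"
    proof
      fix B' assume B': "B' \<in> S'"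
      have gb: "g (h' B') \<in> block_part actW B'" using bp_hom[OF hg] h'b B' by blast
      show "k B' \<in> block_part actW B'"
      proof (cases "B' = B")
        case True then show ?thesis unfolding k_def using bp_diff[OF eq w(1) MW] gb w(2) by simp
      next
        case False then show ?thesis unfolding k_def using gb by simp
      qed
    qed
    have "k B = 0" using indep[OF eq MW fS' kb ks] BS' by blast
    then have "g (h' B) = w" unfolding k_def by simp
    then have "h' B \<noteq> 0" using w(3) g0 by auto
    then show "B \<in> Supp sc R actV" unfolding Supp_iff[OF MV] using w(1) h'b BS' by blast
  qed
  have s3: "Supp sc R actV \<subseteq> Supp sc R actU \<union> Supp sc R actW"
  proof
    fix B assume "B \<in> Supp sc R actV"
    then have "B \<in> blocks sc R \<and> (\<exists>x\<in>block_part actV B. x \<noteq> 0)" by (simp only: Supp_iff[OF MV])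
    then obtain v where v: "B \<in> blocks sc R" "v \<in> block_part actV B" "v \<noteq> 0" by blast
    show "B \<in> Supp sc R actU \<union> Supp sc R actW"
    proof (cases "g v = 0")
      case True
      then obtain u where u: "v = f u" using ker by auto
      have "u \<in> block_part actU B" using bp_refl[OF hf inj] v(2) u by simp
      moreover have "u \<noteq> 0" using u v(3) f0 by auto
      ultimately have "B \<in> Supp sc R actU" unfolding Supp_iff[OF MU] using v(1) by blast
      then show ?thesis by blast
    next
      case False
      then have "B \<in> Supp sc R actW" unfolding Supp_iff[OF MW] using v(1) bp_hom[OF hg v(2)] by blast
      then show ?thesis by blast
    qed
  qed
  show ?thesis using bU bW s1 s2 s3 by blast
qed

end
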